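(* Let $p$ be an odd prime and $m=p-1$. Let $O$ be either $\tilde D_b$ or $\tilde E_b$ for any $b\in\{0,1,\ldots,p-1\}$ (an $m\times m$ sequence design). Then: (i) $O$ is a Latin square, i.e., every row and every column of $O$ is a permutation of $\{1,\ldots,m\}$; (ii) $O$ is pair-balanced with $t_{i,j}=1$ for all $1\le i\ne j\le m$; (iii) $d_H(O)=m$.
   Context: Let $p$ be an odd prime, $m=p-1$, $h=(1,\ldots,m)$. The good lattice point set $D_0$ is the $p\times m$ matrix whose $i$th row is $i\,h \pmod p$, $i=1,\ldots,p$ (so its last row is $(0,\ldots,0)$). The Williams transformation $W:\{0,\ldots,p-1\}\to\{0,\ldots,p-1\}$ is $W(x)=2x$ for $0\le x<p/2$ and $W(x)=2(p-x)-1$ for $p/2\le x\le p-1$. For $b\in\{0,\ldots,p-1\}$, $D_b=D_0+b\pmod p$ entrywise (last row $(b,\ldots,b)$) and $E_b=W(D_b)$ entrywise (last row $(W(b),\ldots,W(b))$). The leave-one-out design $\tilde D_b$ is obtained from $D_b$ by deleting its last row and replacing each entry $x$ by $x+1$ if $x<b$ and leaving it as $x$ if $x>b$; $\tilde E_b$ is obtained from $E_b$ by deleting its last row and replacing each entry $x$ by $x+1$ if $x<W(b)$ and by $x$ if $x>W(b)$. Both are $m\times m$ matrices with entries in $\{1,\ldots,m\}$. A sequence design is a matrix each of whose rows is a permutation of $\{1,\ldots,m\}$. For $i\ne j$, $t_{i,j}$ is the number of times component $i$ is immediately followed by component $j$ (i.e., the number of pairs (row $r$, position $s$) with $O_{rs}=i$,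 $O_{r,s+1}=j$). $O$ is pair-balanced if all $t_{i,j}$, $i\ne j$, are equal. $d_H(o_i,o_j)=\#\{k:o_{ik}\ne o_{jk}\}$ and $d_H(O)$ is the minimum over distinct row pairs. *)

theory Defs
  imports "HOL-Computational_Algebra.Primes"
begin

text \<open>Matrices are functions nat => nat => nat; row index r and column index k
  both range over {1..m} (1-based, as in the paper), m = p - 1.\<close>

definition williams :: "nat \<Rightarrow> nat \<Rightarrow> nat" where
  "williams p x = (if 2 * x < p then 2 * x else 2 * (p - x) - 1)"

text \<open>D_b: entry (r,k) = (r*k + b) mod p, for rows r = 1..p (row p is (b,...,b)).\<close>
definition Dmat :: "nat \<Rightarrow> nat \<Rightarrow> nat \<Rightarrow> nat \<Rightarrow> nat" where
  "Dmat p b r k = (r * k + b) mod p"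

definition Emat :: "nat \<Rightarrow> nat \<Rightarrow> nat \<Rightarrow> nat \<Rightarrow> nat" where
  "Emat p b r k = williams p (Dmat p b r k)"

text \<open>leave-one-out relabelling relative to the value c of the deleted last row\<close>
definition loo :: "nat \<Rightarrow> nat \<Rightarrow> nat" where
  "loo c x = (if x < c then x + 1 else x)"

text \<open>Leave-one-out designs (last row deleted: only rows 1..p-1 are considered).\<close>
definition Dtilde :: "nat \<Rightarrow> nat \<Rightarrow> nat \<Rightarrow> nat \<Rightarrow> nat" where
  "Dtilde p b r k = loo b (Dmat p b r k)"

definition Etilde :: "nat \<Rightarrow> nat \<Rightarrow> nat \<Rightarrow> nat \<Rightarrow> nat" where
  "Etilde p b r k = loo (williams p b) (Emat p b r k)"

definition latin_square :: "nat \<Rightarrow> (nat \<Rightarrow> nat \<Rightarrow> nat) \<Rightarrow> bool" where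
  "latin_square m A \<longleftrightarrow>
     (\<forall>r\<in>{1..m}. bij_betw (\<lambda>k. A r k) {1..m} {1..m}) \<and>
     (\<forall>k\<in>{1..m}. bij_betw (\<lambda>r. A r k) {1..m} {1..m})"

definition tcount :: "nat \<Rightarrow> (nat \<Rightarrow> nat \<Rightarrow> nat) \<Rightarrow> nat \<Rightarrow> nat \<Rightarrow> nat" where
  "tcount m A i j = card {(r, s). r \<in> {1..m} \<and> s \<in> {1..<m} \<and> A r s = i \<and> A r (s + 1) = j}"

definition pair_balanced :: "nat \<Rightarrow> (nat \<Rightarrow> nat \<Rightarrow> nat) \<Rightarrow> bool" where
  "pair_balanced m A \<longleftrightarrow>
     (\<forall>i\<in>{1..m}. \<forall>j\<in>{1..m}. \<forall>i'\<in>{1..m}. \<forall>j'\<in>{1..m}.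
        i \<noteq> j \<longrightarrow> i' \<noteq> j' \<longrightarrow> tcount m A i j = tcount m A i' j')"

definition hamming :: "nat \<Rightarrow> (nat \<Rightarrow> nat \<Rightarrow> nat) \<Rightarrow> nat \<Rightarrow> nat \<Rightarrow> nat" where
  "hamming m A r1 r2 = card {k \<in> {1..m}. A r1 k \<noteq> A r2 k}"

definition dH :: "nat \<Rightarrow> (nat \<Rightarrow> nat \<Rightarrow> nat) \<Rightarrow> nat" where
  "dH m A = Min {hamming m A r1 r2 | r1 r2. r1 \<in> {1..m} \<and> r2 \<in> {1..m} \<and> r1 \<noteq> r2}"

end

theory Submission
  imports Defs "HOL-Number_Theory.Cong"
begin

lemma loo_bij: assumes "c < p" shows "bij_betw (loo c) ({..<p} - {c}) {1..p-1}"
  unfolding bij_betw_def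
proof
  show "inj_on (loo c) ({..<p} - {c})" by (auto simp: inj_on_def loo_def split: if_splits)
  show "loo c ` ({..<p} - {c}) = {1..p - 1}"
  proof
    show "loo c ` ({..<p} - {c}) \<subseteq> {1..p - 1}" using assms by (auto simp: loo_def)
    show "{1..p - 1} \<subseteq> loo c ` ({..<p} - {c})"
    proof
      fix x assume x: "x \<in> {1..p-1}"
      show "x \<in> loo c ` ({..<p} - {c})"
      proof (cases "x \<le> c")
        case True
        then have "loo c (x-1) = x" using x by (auto simp: loo_def)
        moreover have "x - 1 \<in> {..<p} - {c}" using x True by auto
        ultimately show ?thesis by (metis image_eqI)
      next
        case False
        then have "loo c x = x" by (auto simp: loo_def)
        moreover have "x \<in> {..<p} - {c}" using x False by auto
        ultimately show ?thesis by (metis image_eqI)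
      qed
    qed
  qed
qed

lemma will_bij: assumes "odd p" shows "bij_betw (williams p) {..<p} {..<p}"
proof -
  have inj: "inj_on (williams p) {..<p}"
  proof (rule inj_onI)
    fix x y assume xy: "x \<in> {..<p}" "y \<in> {..<p}" "williams p x = williams p y"
    show "x = y"
    proof (cases "2*x < p"; cases "2*y < p")
      assume "2*x < p" "\<not> 2*y<p" then show ?thesis using xy by (simp add: williams_def) presburger
    next
      assume "\<not> 2*x < p" "2*y<p" then show ?thesis using xy by (simp add: williams_def) presburger
    qed (use xy in \<open>auto simp: williams_def\<close>)
  qed
  have sub: "williams p ` {..<p} \<subseteq> {..<p}"
    using assms by (auto simp: williams_def)
  have "williams p ` {..<p} = {..<p}"
    by (rule card_subset_eq) (use inj sub in \<open>auto simp: card_image\<close>)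
  then show ?thesis using inj by (simp add: bij_betw_def)
qed

lemma D_bij: fixes p b r :: nat assumes "prime p" "b < p" "r \<in> {1..p-1}"
  shows "bij_betw (\<lambda>k. (r*k+b) mod p) {1..p-1} ({..<p}-{b})"
proof -
  have p0: "p > 1" using assms(1) prime_gt_1_nat by blast
  have "\<not> p dvd r" using assms(3) by (auto dest: dvd_imp_le)
  then have cop: "coprime r p"
    using prime_imp_coprime[OF assms(1), of r] by (simp add: coprime_commute)
  have inj: "inj_on (\<lambda>k. (r*k+b) mod p) {1..p-1}"
  proof (rule inj_onI)
    fix x y assume xy: "x \<in> {1..p-1}" "y \<in> {1..p-1}" "(r*x+b) mod p = (r*y+b) mod p"
    then have "[r*x+b = r*y+b] (mod p)" by (simp add: cong_def)
    then have "[r*x = r*y] (mod p)" by (simp add: cong_add_rcancel_nat)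
    then have "[x = y] (mod p)" using cong_mult_lcancel_nat[OF cop] by simp
    then show "x = y" using xy p0 by (auto simp: cong_def)
  qed
  have sub: "(\<lambda>k. (r*k+b) mod p) ` {1..p-1} \<subseteq> {..<p}-{b}"
  proof
    fix z assume "z \<in> (\<lambda>k. (r*k+b) mod p) ` {1..p-1}"
    then obtain k where k: "k \<in> {1..p-1}" "z = (r*k+b) mod p" by auto
    have "z < p" using k p0 by simp
    moreover have "z \<noteq> b"
    proof
      assume "z = b"
      then have "[r*k+b = 0+b] (mod p)" using k assms(2) by (simp add: cong_def)
      then have "[r*k = 0] (mod p)" using cong_add_rcancel_nat[of "r*k" b 0 p] by simp
      then have "p dvd r*k" by (simp add: cong_0_iff)
      then have "p dvd r \<or> p dvd k" using assms(1) prime_dvd_mult_iff by blast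
      then show False using k assms(3) by (auto dest: dvd_imp_le)
    qed
    ultimately show "z \<in> {..<p}-{b}" by auto
  qed
  have "(\<lambda>k. (r*k+b) mod p) ` {1..p-1} = {..<p}-{b}"
    by (rule card_subset_eq) (use inj sub assms(2) p0 in \<open>auto simp: card_image\<close>)
  then show ?thesis using inj by (simp add: bij_betw_def)
qed

lemma main:
  fixes p b m :: nat and g :: "nat \<Rightarrow> nat" and A :: "nat \<Rightarrow> nat \<Rightarrow> nat"
  assumes pr: "prime p" and od: "odd p" and mdef: "m = p - 1" and bp: "b < p"
    and gb: "bij_betw g ({..<p}-{b}) {1..p-1}"
    and Adef: "A = (\<lambda>r k. g ((r*k+b) mod p))"
  shows "latin_square m A
     \<and> pair_balanced m A
     \<and> (\<forall>i\<in>{1..m}. \<forall>j\<in>{1..m}. i \<noteq> j \<longrightarrow> tcount m A i j = 1)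
     \<and> dH m A = m"
proof -
  have p1: "p > 1" using pr prime_gt_1_nat by blast
  have p3: "p \<ge> 3"
  proof -
    have "p \<noteq> 2" using od by auto
    then show ?thesis using p1 by linarith
  qed
  have ginj: "inj_on g ({..<p}-{b})" using bij_betw_imp_inj_on[OF gb] .
  have gim: "g ` ({..<p}-{b}) = {1..p-1}" using bij_betw_imp_surj_on[OF gb] .
  have Dm: "(r*k+b) mod p \<in> {..<p}-{b}" if "r \<in> {1..p-1}" "k \<in> {1..p-1}" for r k
    using bij_betw_apply[OF D_bij[OF pr bp that(1)] that(2)] .
  have Dinj: "inj_on (\<lambda>k. (r*k+b) mod p) {1..p-1}" if "r \<in> {1..p-1}" for r
    using bij_betw_imp_inj_on[OF D_bij[OF pr bp that]] .
  have Dinj2: "(r1*k+b) mod p \<noteq> (r2*k+b) mod p" if "r1 \<in> {1..p-1}" "r2 \<in> {1..p-1}" "k \<in> {1..p-1}" "r1 \<noteq> r2" for r1 r2 k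
  proof
    assume "(r1*k+b) mod p = (r2*k+b) mod p"
    then have "(k*r1+b) mod p = (k*r2+b) mod p" by (simp add: mult.commute)
    then show False using inj_onD[OF Dinj[OF that(3)]] that by blast
  qed
  have latin: "latin_square m A"
    unfolding latin_square_def
  proof (intro conjI ballI)
    fix r assume r: "r \<in> {1..m}"
    have "bij_betw (g \<circ> (\<lambda>k. (r*k+b) mod p)) {1..p-1} {1..p-1}"
      by (rule bij_betw_trans[OF D_bij[OF pr bp] gb]) (use r mdef in auto)
    then show "bij_betw (\<lambda>k. A r k) {1..m} {1..m}" by (simp add: Adef o_def mdef)
  next
    fix k assume k: "k \<in> {1..m}"
    have "bij_betw (g \<circ> (\<lambda>r. (k*r+b) mod p)) {1..p-1} {1..p-1}"
      by (rule bij_betw_trans[OF D_bij[OF pr bp] gb]) (use k mdef in auto)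
    then show "bij_betw (\<lambda>r. A r k) {1..m} {1..m}" by (simp add: Adef o_def mdef mult.commute)
  qed
  have tc: "tcount m A i j = 1" if ij: "i \<in> {1..m}" "j \<in> {1..m}" "i \<noteq> j" for i j
  proof -
    obtain x where x: "x \<in> {..<p}-{b}" "g x = i" using gim ij mdef by (metis (no_types, lifting) imageE)
    obtain y where y: "y \<in> {..<p}-{b}" "g y = j" using gim ij mdef by (metis (no_types, lifting) imageE)
    have xy: "x \<noteq> y" using x y ij by auto
    define r0 where "r0 = (if x < y then y - x else y + p - x)"
    have xp: "x < p" "y < p" using x y by auto
    have r0: "r0 \<in> {1..p-1}"
    proof (cases "x < y")
      case True then show ?thesis using xp unfolding r0_def by (simp, linarith)
    next
      case False then show ?thesis using xp xy unfolding r0_def by (simp, linarith)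
    qed
    have r0x: "(x + r) mod p = y \<longleftrightarrow> r = r0" if "r \<in> {1..p-1}" for r
    proof
      have e: "(x + r0) mod p = y"
      proof (cases "x < y")
        case True
        then have "x + r0 = y" unfolding r0_def by simp
        then show ?thesis using xp by simp
      next
        case False
        then have "x + r0 = y + p" using xp unfolding r0_def by simp
        then show ?thesis using xp by simp
      qed
      show "(x + r) mod p = y \<Longrightarrow> r = r0"
      proof -
        assume "(x + r) mod p = y"
        then have "[x + r = x + r0] (mod p)" using e by (simp add: cong_def)
        then have "[r = r0] (mod p)" by (simp add: cong_add_lcancel_nat)
        then show "r = r0" using that r0 p1 by (auto simp: cong_def)
      qed
      show "r = r0 \<Longrightarrow> (x + r) mod p = y" using e by simp
    qed
    have step: "(r*(s+1)+b) mod p = ((r*s+b) mod p + r) mod p" for r s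
    proof -
      have "r*(s+1)+b = (r*s+b)+r" by (simp add: algebra_simps)
      then show ?thesis by (simp only: mod_add_left_eq)
    qed
    have "x \<in> (\<lambda>k. (r0*k+b) mod p) ` {1..p-1}"
      using bij_betw_imp_surj_on[OF D_bij[OF pr bp r0]] x by simp
    then obtain s0 where s0: "s0 \<in> {1..p-1}" "(r0*s0+b) mod p = x"
      by (auto simp del: atLeastAtMost_iff)
    have y0: "(r0*(s0+1)+b) mod p = y" using step[of r0 s0] s0 r0x[OF r0] by simp
    have s0m: "s0 \<noteq> p - 1"
    proof
      assume "s0 = p - 1"
      then have "r0*(s0+1)+b = b + p*r0" using p1 by (simp add: algebra_simps)
      then have "(r0*(s0+1)+b) mod p = b" using bp by simp
      then show False using y0 y by auto
    qed
    let ?S = "{(r, s). r \<in> {1..m} \<and> s \<in> {1..<m} \<and> A r s = i \<and> A r (s + 1) = j}"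
    have "?S = {(r0, s0)}"
    proof (rule set_eqI, rule iffI)
      fix z assume "z \<in> ?S"
      then obtain r s where z: "z = (r,s)" "r \<in> {1..m}" "s \<in> {1..<m}" "A r s = i" "A r (s+1) = j" by blast
      have r: "r \<in> {1..p-1}" using z mdef by auto
      have s: "s \<in> {1..p-1}" "s+1 \<in> {1..p-1}" using z mdef by auto
      have dx: "(r*s+b) mod p = x"
        using inj_onD[OF ginj _ Dm[OF r s(1)] x(1)] z(4) x(2) Adef by auto
      have dy: "(r*(s+1)+b) mod p = y"
        using inj_onD[OF ginj _ Dm[OF r s(2)] y(1)] z(5) y(2) Adef by auto
      have "(x + r) mod p = y" using step[of r s] dx dy by simp
      then have rr: "r = r0" using r0x[OF r] by simp
      have "s = s0" using inj_onD[OF Dinj[OF r0] _ s(1) s0(1)] dx s0(2) rr by simp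
      then show "z \<in> {(r0, s0)}" using z rr by simp
    next
      fix z assume "z \<in> {(r0, s0)}"
      then have z: "z = (r0, s0)" by simp
      show "z \<in> ?S" unfolding z using r0 s0 s0m mdef x y y0 Adef by auto
    qed
    then show ?thesis by (simp add: tcount_def)
  qed
  have pb: "pair_balanced m A" unfolding pair_balanced_def using tc by simp
  have ham: "hamming m A r1 r2 = m" if "r1 \<in> {1..m}" "r2 \<in> {1..m}" "r1 \<noteq> r2" for r1 r2
  proof -
    have "{k \<in> {1..m}. A r1 k \<noteq> A r2 k} = {1..m}"
    proof safe
      fix k assume k: "k \<in> {1..m}" "A r1 k = A r2 k"
      have "(r1*k+b) mod p = (r2*k+b) mod p"
        using inj_onD[OF ginj _ Dm Dm] k that mdef Adef by auto
      then show False using Dinj2[of r1 r2 k] k that mdef by auto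
    qed
    then show ?thesis by (simp add: hamming_def)
  qed
  have "{hamming m A r1 r2 | r1 r2. r1 \<in> {1..m} \<and> r2 \<in> {1..m} \<and> r1 \<noteq> r2} = {m}"
  proof (rule set_eqI, rule iffI)
    fix z assume "z \<in> {hamming m A r1 r2 | r1 r2. r1 \<in> {1..m} \<and> r2 \<in> {1..m} \<and> r1 \<noteq> r2}"
    then show "z \<in> {m}" using ham by auto
  next
    fix z assume "z \<in> {m}"
    then have "z = hamming m A 1 2" using ham[of 1 2] mdef p3 by auto
    moreover have "(1::nat) \<in> {1..m} \<and> (2::nat) \<in> {1..m}" using mdef p3 by auto
    ultimately show "z \<in> {hamming m A r1 r2 | r1 r2. r1 \<in> {1..m} \<and> r2 \<in> {1..m} \<and> r1 \<noteq> r2}"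
      by fastforce
  qed
  then have "dH m A = m" by (simp add: dH_def)
  then show ?thesis using latin pb tc by blast
qed

theorem theorem1:
  fixes p b m :: nat and A :: "nat \<Rightarrow> nat \<Rightarrow> nat"
  assumes "prime p" and "odd p" and "m = p - 1" and "b < p"
    and "A = Dtilde p b \<or> A = Etilde p b"
  shows "latin_square m A
     \<and> pair_balanced m A
     \<and> (\<forall>i\<in>{1..m}. \<forall>j\<in>{1..m}. i \<noteq> j \<longrightarrow> tcount m A i j = 1)
     \<and> dH m A = m"
  using assms(5)
proof
  assume "A = Dtilde p b"
  then have "A = (\<lambda>r k. loo b ((r*k+b) mod p))" by (simp add: Dtilde_def Dmat_def fun_eq_iff)
  then show ?thesis using main[OF assms(1-4) loo_bij[OF assms(4)]] by blast
next
  assume "A = Etilde p b"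
  then have A: "A = (\<lambda>r k. (loo (williams p b) \<circ> williams p) ((r*k+b) mod p))"
    by (simp add: Etilde_def Emat_def Dmat_def fun_eq_iff)
  have W: "bij_betw (williams p) {..<p} {..<p}" using will_bij[OF assms(2)] .
  have Wb: "williams p b < p" using bij_betw_apply[OF W] assms(4) by auto
  have "bij_betw (williams p) {b} {williams p b}" by (simp add: bij_betw_def)
  then have W2: "bij_betw (williams p) ({..<p}-{b}) ({..<p}-{williams p b})"
    by (rule bij_betw_DiffI[OF W]) (use assms(4) Wb in auto)
  have "bij_betw (loo (williams p b) \<circ> williams p) ({..<p}-{b}) {1..p-1}"
    by (rule bij_betw_trans[OF W2 loo_bij[OF Wb]])
  then show ?thesis using main[OF assms(1-4) _ A] by blast
qed

end
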